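(* Let $J\subseteq S$. The maps $\Pi_\downarrow^J$ and $\Pi_\uparrow^J$ are order-preserving with respect to $\le_S$.
   Context: $\mathfrak{S}_n$ is the symmetric group on $[n]$, $s_i=(i,i+1)$, $S=\{s_1,\dots,s_{n-1}\}$, one-line notation $w=w_1\cdots w_n$, $\mathrm{inv}(w)=\{(i,j):i<j,\ w_i>w_j\}$, weak order $u\le_S v\iff\mathrm{inv}(u)\subseteq\mathrm{inv}(v)$. For $J\subseteq S$, $\mathfrak{S}_n^J$ is the set of $w$ with $w_i<w_{i+1}$ whenever $s_i\in J$. Writing $J=S\setminus\{s_{j_1},\dots,s_{j_r}\}$ with $j_1<\dots<j_r$, the $J$-regions are $\{1,\dots,j_1\},\{j_1+1,\dots,j_2\},\dots,\{j_r+1,\dots,n\}$. $w\in\mathfrak{S}_n^J$ is $(J,231)$-avoiding if there are no indices $i<j<k$ in pairwise different $J$-regions with $w_k<w_i<w_j$ and $w_i=w_k+1$, and $(J,132)$-avoiding if there are no indices $i<j<k$ in pairwise different $J$-regions with $w_i<w_k<w_j$ and $w_k=w_i+1$. For $w\in\mathfrak{S}_n^J$, $\Pi_\downarrow^J(w)$ is the unique greatest $(J,231)$-avoiding element of $\mathfrak{S}_n^J$ that is $\le_S w$, and $\Pi_\uparrow^J(w)$ is the unique least $(J,132)$-avoiding element of $\mathfrak{S}_n^J$ that is $\ge_S w$ (both exist). *)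

theory Defs
  imports "HOL-Combinatorics.Permutations"
begin

(* A permutation w of [n] in one-line notation w_1 ... w_n is a function
   w :: nat => nat with  w permutes {1..n}  (w i = w_i).
   The simple reflection s_i is identified with the index i, so S = {1..<n}
   and a subset J of S is a set of naturals J \<subseteq> {1..<n}. *)

definition inv_set :: "nat \<Rightarrow> (nat \<Rightarrow> nat) \<Rightarrow> (nat \<times> nat) set" where
  "inv_set n w = {(i, j). 1 \<le> i \<and> i < j \<and> j \<le> n \<and> w i > w j}"

definition weak_le :: "nat \<Rightarrow> (nat \<Rightarrow> nat) \<Rightarrow> (nat \<Rightarrow> nat) \<Rightarrow> bool" where
  "weak_le n u v \<longleftrightarrow> inv_set n u \<subseteq> inv_set n v"

definition quot :: "nat \<Rightarrow> nat set \<Rightarrow> (nat \<Rightarrow> nat) set" where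
  "quot n J = {w. w permutes {1..n} \<and> (\<forall>i\<in>J. w i < w (Suc i))}"

(* index of the J-region containing position i: regions are
   {1..j_1}, {j_1+1..j_2}, ..., {j_r+1..n} where {j_1<...<j_r} = S - J *)
definition region :: "nat \<Rightarrow> nat set \<Rightarrow> nat \<Rightarrow> nat" where
  "region n J i = card {d. d \<in> {1..<n} \<and> d \<notin> J \<and> d < i}"

definition diff_regions :: "nat \<Rightarrow> nat set \<Rightarrow> nat \<Rightarrow> nat \<Rightarrow> nat \<Rightarrow> bool" where
  "diff_regions n J i j k \<longleftrightarrow>
     region n J i \<noteq> region n J j \<and> region n J j \<noteq> region n J k \<and> region n J i \<noteq> region n J k"

definition avoids231 :: "nat \<Rightarrow> nat set \<Rightarrow> (nat \<Rightarrow> nat) \<Rightarrow> bool" where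
  "avoids231 n J w \<longleftrightarrow> \<not> (\<exists>i j k. 1 \<le> i \<and> i < j \<and> j < k \<and> k \<le> n \<and> diff_regions n J i j k
      \<and> w k < w i \<and> w i < w j \<and> w i = w k + 1)"

definition avoids132 :: "nat \<Rightarrow> nat set \<Rightarrow> (nat \<Rightarrow> nat) \<Rightarrow> bool" where
  "avoids132 n J w \<longleftrightarrow> \<not> (\<exists>i j k. 1 \<le> i \<and> i < j \<and> j < k \<and> k \<le> n \<and> diff_regions n J i j k
      \<and> w i < w k \<and> w k < w j \<and> w k = w i + 1)"

definition Pi_down :: "nat \<Rightarrow> nat set \<Rightarrow> (nat \<Rightarrow> nat) \<Rightarrow> (nat \<Rightarrow> nat)" where
  "Pi_down n J w = (THE x. x \<in> quot n J \<and> avoids231 n J x \<and> weak_le n x w \<and>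
      (\<forall>y \<in> quot n J. avoids231 n J y \<and> weak_le n y w \<longrightarrow> weak_le n y x))"

definition Pi_up :: "nat \<Rightarrow> nat set \<Rightarrow> (nat \<Rightarrow> nat) \<Rightarrow> (nat \<Rightarrow> nat)" where
  "Pi_up n J w = (THE x. x \<in> quot n J \<and> avoids132 n J x \<and> weak_le n w x \<and>
      (\<forall>y \<in> quot n J. avoids132 n J y \<and> weak_le n w y \<longrightarrow> weak_le n x y))"

end

theory Submission
  imports Defs
begin

lemma region_mono: "p \<le> q \<Longrightarrow> region n J p \<le> region n J q"
  unfolding region_def by (rule card_mono) auto

lemma region_J: "d \<in> J \<Longrightarrow> region n J d = region n J (Suc d)"
  unfolding region_def by (rule arg_cong[where f=card]) (auto simp: less_Suc_eq)

lemma diff_regions_lt: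
  assumes "i < j" "j < k" "diff_regions n J i j k"
  shows "region n J i < region n J j" "region n J j < region n J k"
  using assms region_mono[of i j n J] region_mono[of j k n J] unfolding diff_regions_def by auto

lemma tr_out: "y \<noteq> a \<Longrightarrow> y \<noteq> Suc a \<Longrightarrow> transpose a (Suc a) y = y"
  by (simp add: transpose_def)

lemma tr_in1: "x = a \<or> x = Suc a \<Longrightarrow> y \<noteq> a \<Longrightarrow> y \<noteq> Suc a \<Longrightarrow>
    (transpose a (Suc a) x < y) = (x < y)"
  by (auto simp add: transpose_def)

lemma tr_in2: "x = a \<or> x = Suc a \<Longrightarrow> y \<noteq> a \<Longrightarrow> y \<noteq> Suc a \<Longrightarrow>
    (y < transpose a (Suc a) x) = (y < x)"
  by (auto simp add: transpose_def)

lemma swap_cmp: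
  assumes "inj w" "w i \<noteq> w k" "{w i, w k} = {a, Suc a}" "p \<noteq> q" "{p, q} \<noteq> {i, k}"
  shows "(transpose a (Suc a) (w p) < transpose a (Suc a) (w q)) = (w p < w q)"
proof -
  have ab: "(w i = a \<and> w k = Suc a) \<or> (w i = Suc a \<and> w k = a)"
    using assms(3) by (simp add: doubleton_eq_iff)
  have ninj: "w x \<noteq> w y" if "x \<noteq> y" for x y using assms(1) that by (meson injD)
  consider "p \<notin> {i, k}" "q \<notin> {i, k}" | "p \<in> {i, k}" "q \<notin> {i, k}" | "p \<notin> {i, k}" "q \<in> {i, k}"
    using assms(4,5) by blast
  then show ?thesis
  proof cases
    case 1
    then have "w p \<noteq> a" "w p \<noteq> Suc a" "w q \<noteq> a" "w q \<noteq> Suc a"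
      using ab ninj[of p i] ninj[of p k] ninj[of q i] ninj[of q k] by auto
    then show ?thesis by (simp add: tr_out)
  next
    case 2
    then have "w q \<noteq> a" "w q \<noteq> Suc a" using ab ninj[of q i] ninj[of q k] by auto
    moreover have "w p = a \<or> w p = Suc a" using 2 ab by auto
    ultimately show ?thesis by (simp add: tr_out tr_in1)
  next
    case 3
    then have "w p \<noteq> a" "w p \<noteq> Suc a" using ab ninj[of p i] ninj[of p k] by auto
    moreover have "w q = a \<or> w q = Suc a" using 3 ab by auto
    ultimately show ?thesis by (simp add: tr_out tr_in2)
  qed
qed

lemma finite_inv: "finite (inv_set n w)"
  by (rule finite_subset[of _ "{1..n} \<times> {1..n}"]) (auto simp: inv_set_def)

lemma inv_eq_imp_eq:
  assumes u: "u permutes {1..n}" and v: "v permutes {1..n}" and e: "inv_set n u = inv_set n v"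
  shows "u = v"
proof
  fix p
  show "u p = v p"
  proof (cases "p \<in> {1..n}")
    case False then show ?thesis using u v by (simp add: permutes_not_in)
  next
    case True
    have cnt: "w p - 1 = card {q \<in> {1..n}. q < p \<and> (q, p) \<notin> inv_set n w} + card {q. (p, q) \<in> inv_set n w}"
      if w: "w permutes {1..n}" for w
    proof -
      have injw: "inj w" using w by (simp add: permutes_inj)
      have "{q \<in> {1..n}. w q < w p} = {q \<in> {1..n}. q < p \<and> (q, p) \<notin> inv_set n w} \<union> {q. (p, q) \<in> inv_set n w}"
      proof (intro equalityI subsetI)
        fix q assume q: "q \<in> {q \<in> {1..n}. w q < w p}"
        then have "q \<noteq> p" by auto
        then have "q < p \<or> p < q" by arith
        then show "q \<in> {q \<in> {1..n}. q < p \<and> (q, p) \<notin> inv_set n w} \<union> {q. (p, q) \<in> inv_set n w}"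
        proof
          assume "q < p" then show ?thesis using q by (simp add: inv_set_def)
        next
          assume "p < q" then show ?thesis using q True by (simp add: inv_set_def)
        qed
      next
        fix q assume q: "q \<in> {q \<in> {1..n}. q < p \<and> (q, p) \<notin> inv_set n w} \<union> {q. (p, q) \<in> inv_set n w}"
        then show "q \<in> {q \<in> {1..n}. w q < w p}"
        proof
          assume q1: "q \<in> {q \<in> {1..n}. q < p \<and> (q, p) \<notin> inv_set n w}"
          then have "\<not> w q > w p" using True by (simp add: inv_set_def)
          moreover have "w q \<noteq> w p" using q1 injw by (metis (mono_tags, lifting) injD mem_Collect_eq less_irrefl)
          ultimately show ?thesis using q1 by simp
        next
          assume "q \<in> {q. (p, q) \<in> inv_set n w}"
          then show ?thesis by (simp add: inv_set_def)
        qed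
      qed
      moreover have "card ({q \<in> {1..n}. q < p \<and> (q, p) \<notin> inv_set n w} \<union> {q. (p, q) \<in> inv_set n w}) = card {q \<in> {1..n}. q < p \<and> (q, p) \<notin> inv_set n w} + card {q. (p, q) \<in> inv_set n w}"
        by (rule card_Un_disjoint) (auto simp: inv_set_def intro: finite_subset[of _ "{1..n}"])
      moreover have "card {q \<in> {1..n}. w q < w p} = w p - 1"
      proof -
        have "w ` {q \<in> {1..n}. w q < w p} = {1..<w p}"
        proof
          show "w ` {q \<in> {1..n}. w q < w p} \<subseteq> {1..<w p}"
          proof
            fix x assume "x \<in> w ` {q \<in> {1..n}. w q < w p}"
            then obtain q where "q \<in> {1..n}" "w q < w p" "x = w q" by auto
            moreover have "w q \<in> {1..n}" using permutes_in_image[OF w] calculation(1) by blast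
            ultimately show "x \<in> {1..<w p}" by simp
          qed
          show "{1..<w p} \<subseteq> w ` {q \<in> {1..n}. w q < w p}"
          proof
            fix x assume x: "x \<in> {1..<w p}"
            have "w p \<in> {1..n}" using True permutes_in_image[OF w] by blast
            then have "x \<in> {1..n}" using x by auto
            then obtain q where "q \<in> {1..n}" "w q = x"
              using w by (metis permutes_image image_iff)
            then show "x \<in> w ` {q \<in> {1..n}. w q < w p}" using x by auto
          qed
        qed
        moreover have "inj_on w {q \<in> {1..n}. w q < w p}" using permutes_inj[OF w] by (auto intro: inj_on_subset)
        ultimately show ?thesis by (metis card_atLeastLessThan card_image)
      qed
      ultimately show ?thesis by simp
    qed
    have "u p \<in> {1..n}" "v p \<in> {1..n}" using True permutes_in_image[OF u] permutes_in_image[OF v] by blast+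
    then have "u p \<ge> 1" "v p \<ge> 1" by auto
    then show ?thesis using cnt[OF u] cnt[OF v] e by simp
  qed
qed


lemma down_claim:
  assumes w: "w permutes {1..n}" and y: "y permutes {1..n}"
    and sub: "inv_set n y \<subseteq> inv_set n w"
    and ijk: "1 \<le> i" "i < j" "j < k" "k \<le> n" and dr: "diff_regions n J i j k"
    and wv: "w k < w i" "w i < w j" "w i = w k + 1"
    and av: "avoids231 n J y"
  shows "\<not> y k < y i"
proof
  assume lt: "y k < y i"
  have injy: "inj y" and injw: "inj w" using w y by (auto simp: permutes_inj)
  have noinv: "y p \<le> y q" if "p < q" "q \<le> n" "1 \<le> p" "w p < w q" for p q
  proof -
    have "(p, q) \<notin> inv_set n w" using that by (auto simp: inv_set_def)
    then have "(p, q) \<notin> inv_set n y" using sub by auto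
    then show ?thesis using that by (auto simp: inv_set_def)
  qed
  have F: "p < i \<or> k < p" if p: "p \<in> {1..n}" "y k < y p" "y p < y i" for p
  proof -
    have "p \<noteq> i" "p \<noteq> k" using p by auto
    then have "w p \<noteq> w i" "w p \<noteq> w k" using injw by (auto dest: injD)
    then have "w p > w i \<or> w p < w k" using wv by auto
    then show ?thesis
    proof
      assume "w p > w i"
      show ?thesis
      proof (rule ccontr)
        assume "\<not> ?thesis"
        then have "i < p" using \<open>p \<noteq> i\<close> by auto
        then have "y i \<le> y p" using noinv[of i p] p ijk \<open>w p > w i\<close> by auto
        then show False using p by auto
      qed
    next
      assume "w p < w k"
      show ?thesis
      proof (rule ccontr)
        assume "\<not> ?thesis"
        then have "p < k" using \<open>p \<noteq> k\<close> by auto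
        then have "y p \<le> y k" using noinv[of p k] p ijk \<open>w p < w k\<close> by auto
        then show False using p by auto
      qed
    qed
  qed
  define S where "S = {v. y k \<le> v \<and> v < y i \<and> (\<exists>p\<in>{1..n}. y p = v \<and> k \<le> p)}"
  have finS: "finite S" unfolding S_def by (rule finite_subset[of _ "{..<y i}"]) auto
  have "y k \<in> S" unfolding S_def using lt ijk by auto
  then have mS: "Max S \<in> S" using finS by (metis Max_in empty_iff)
  define m where "m = Max S"
  obtain p0 where p0: "p0 \<in> {1..n}" "y p0 = m" "k \<le> p0" "y k \<le> m" "m < y i"
    using mS unfolding S_def m_def by auto
  have yin: "y i \<in> {1..n}" using ijk y permutes_in_image[OF y, of i] by simp
  then have "Suc m \<in> {1..n}" using p0 by auto
  then obtain q where q: "q \<in> {1..n}" "y q = Suc m"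
    using y by (metis permutes_image image_iff)
  have qi: "q \<le> i"
  proof (cases "Suc m = y i")
    case True then have "q = i" using q injy by (auto dest: injD)
    then show ?thesis by simp
  next
    case False
    then have "Suc m < y i" using p0 by auto
    then have "q < i \<or> k < q" using F[OF q(1)] q p0 by auto
    moreover have "\<not> k < q"
    proof
      assume "k < q"
      then have "Suc m \<in> S" unfolding S_def using q p0 \<open>Suc m < y i\<close> by auto
      then have "Suc m \<le> Max S" using finS by auto
      then show False unfolding m_def by simp
    qed
    ultimately show ?thesis by auto
  qed
  have yij: "y i < y j"
  proof -
    have "y i \<le> y j" using noinv[of i j] ijk wv by auto
    moreover have "y i \<noteq> y j" using injy ijk by (auto dest: injD)
    ultimately show ?thesis by auto
  qed
  have ri: "region n J q \<le> region n J i" using region_mono qi by auto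
  have rk: "region n J k \<le> region n J p0" using region_mono p0 by auto
  have "diff_regions n J q j p0"
    using diff_regions_lt[OF ijk(2,3) dr] ri rk unfolding diff_regions_def by auto
  moreover have "y q \<le> y i" using q p0 by auto
  moreover have "1 \<le> q" "q < j" "j < p0" "p0 \<le> n" using q qi ijk p0 by auto
  moreover have "y p0 < y q" "y q = y p0 + 1" using q p0 by auto
  ultimately have "\<exists>i j k. 1 \<le> i \<and> i < j \<and> j < k \<and> k \<le> n \<and> diff_regions n J i j k
      \<and> y k < y i \<and> y i < y j \<and> y i = y k + 1" using yij by (intro exI[of _ q] exI[of _ j] exI[of _ p0]) simp
  then show False using av unfolding avoids231_def by blast
qed


lemma up_claim:
  assumes w: "w permutes {1..n}" and y: "y permutes {1..n}"
    and sub: "inv_set n w \<subseteq> inv_set n y"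
    and ijk: "1 \<le> i" "i < j" "j < k" "k \<le> n" and dr: "diff_regions n J i j k"
    and wv: "w i < w k" "w k < w j" "w k = w i + 1"
    and av: "avoids132 n J y"
  shows "y k < y i"
proof (rule ccontr)
  assume "\<not> y k < y i"
  moreover have "y k \<noteq> y i" using permutes_inj[OF y] ijk by (metis injD less_trans less_irrefl)
  ultimately have lt: "y i < y k" by auto
  have injy: "inj y" and injw: "inj w" using w y by (auto simp: permutes_inj)
  have isinv: "y p > y q" if "p < q" "q \<le> n" "1 \<le> p" "w p > w q" for p q
  proof -
    have "(p, q) \<in> inv_set n w" using that by (auto simp: inv_set_def)
    then have "(p, q) \<in> inv_set n y" using sub by auto
    then show ?thesis using that by (auto simp: inv_set_def)
  qed
  have F: "p < i \<or> k < p" if p: "p \<in> {1..n}" "y i < y p" "y p < y k" for p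
  proof -
    have "p \<noteq> i" "p \<noteq> k" using p by auto
    then have "w p \<noteq> w i" "w p \<noteq> w k" using injw by (auto dest: injD)
    then have "w p > w k \<or> w p < w i" using wv by auto
    then show ?thesis
    proof
      assume "w p > w k"
      show ?thesis
      proof (rule ccontr)
        assume "\<not> ?thesis"
        then have "p < k" using \<open>p \<noteq> k\<close> by auto
        then have "y p > y k" using isinv[of p k] p ijk \<open>w p > w k\<close> by auto
        then show False using p by auto
      qed
    next
      assume "w p < w i"
      show ?thesis
      proof (rule ccontr)
        assume "\<not> ?thesis"
        then have "i < p" using \<open>p \<noteq> i\<close> by auto
        then have "y i > y p" using isinv[of i p] p ijk \<open>w p < w i\<close> by auto
        then show False using p by auto
      qed
    qed
  qed
  define S where "S = {v. y i \<le> v \<and> v < y k \<and> (\<exists>p\<in>{1..n}. y p = v \<and> p \<le> i)}"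
  have finS: "finite S" unfolding S_def by (rule finite_subset[of _ "{..<y k}"]) auto
  have "y i \<in> S" unfolding S_def using lt ijk by auto
  then have mS: "Max S \<in> S" using finS by (metis Max_in empty_iff)
  define m where "m = Max S"
  obtain p0 where p0: "p0 \<in> {1..n}" "y p0 = m" "p0 \<le> i" "y i \<le> m" "m < y k"
    using mS unfolding S_def m_def by auto
  have yin: "y k \<in> {1..n}" using ijk y permutes_in_image[OF y, of k] by simp
  then have "Suc m \<in> {1..n}" using p0 by auto
  then obtain q where q: "q \<in> {1..n}" "y q = Suc m"
    using y by (metis permutes_image image_iff)
  have qk: "k \<le> q"
  proof (cases "Suc m = y k")
    case True then have "q = k" using q injy by (auto dest: injD)
    then show ?thesis by simp
  next
    case False
    then have "Suc m < y k" using p0 by auto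
    then have "q < i \<or> k < q" using F[OF q(1)] q p0 by auto
    moreover have "\<not> q < i"
    proof
      assume "q < i"
      then have "Suc m \<in> S" unfolding S_def using q p0 \<open>Suc m < y k\<close> by auto
      then have "Suc m \<le> Max S" using finS by auto
      then show False unfolding m_def by simp
    qed
    ultimately show ?thesis by auto
  qed
  have yjk: "y k < y j" using isinv[of j k] ijk wv by auto
  have ri: "region n J p0 \<le> region n J i" using region_mono p0 by auto
  have rk: "region n J k \<le> region n J q" using region_mono qk by auto
  have "diff_regions n J p0 j q"
    using diff_regions_lt[OF ijk(2,3) dr] ri rk unfolding diff_regions_def by auto
  moreover have "y q \<le> y k" using q p0 by auto
  moreover have "1 \<le> p0" "p0 < j" "j < q" "q \<le> n" using q qk ijk p0 by auto
  moreover have "y p0 < y q" "y q = y p0 + 1" using q p0 by auto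
  ultimately have "\<exists>i j k. 1 \<le> i \<and> i < j \<and> j < k \<and> k \<le> n \<and> diff_regions n J i j k
      \<and> y i < y k \<and> y k < y j \<and> y k = y i + 1" using yjk by (intro exI[of _ p0] exI[of _ j] exI[of _ q]) simp
  then show False using av unfolding avoids132_def by blast
qed


lemma swap_quot:
  assumes wq: "w \<in> quot n J" and ik: "i < k" "1 \<le> i" "k \<le> n"
    and ab: "{w i, w k} = {a, Suc a}" and rr: "region n J i \<noteq> region n J k"
  shows "transpose a (Suc a) \<circ> w \<in> quot n J"
proof -
  have w: "w permutes {1..n}" and asc: "\<forall>d\<in>J. w d < w (Suc d)" using wq by (auto simp: quot_def)
  have "w i \<in> {1..n}" "w k \<in> {1..n}" using ik permutes_in_image[OF w] by auto
  then have "a \<in> {1..n}" "Suc a \<in> {1..n}" using ab by (auto simp: doubleton_eq_iff)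
  then have p: "transpose a (Suc a) \<circ> w permutes {1..n}"
    by (intro permutes_compose[OF w] permutes_swap_id)
  have wik: "w i \<noteq> w k" using ab by (auto simp: doubleton_eq_iff)
  have "(transpose a (Suc a) \<circ> w) d < (transpose a (Suc a) \<circ> w) (Suc d)" if d: "d \<in> J" for d
  proof -
    have "{d, Suc d} \<noteq> {i, k}"
    proof
      assume "{d, Suc d} = {i, k}"
      then have "d = i" "Suc d = k" using ik by (auto simp: doubleton_eq_iff)
      then show False using rr region_J[OF d, of n] by simp
    qed
    then show ?thesis using swap_cmp[OF permutes_inj[OF w] wik ab, of d "Suc d"] asc d by simp
  qed
  then show ?thesis using p by (simp add: quot_def)
qed

lemma swap_inv:
  assumes w: "w permutes {1..n}" and ik: "i < k" and ab: "{w i, w k} = {a, Suc a}"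
  shows "inv_set n (transpose a (Suc a) \<circ> w) - {(i,k)} = inv_set n w - {(i,k)}"
proof -
  have wik: "w i \<noteq> w k" using ab by (auto simp: doubleton_eq_iff)
  have "((p, q) \<in> inv_set n (transpose a (Suc a) \<circ> w)) = ((p, q) \<in> inv_set n w)"
    if "(p, q) \<noteq> (i, k)" "p < q" for p q
  proof -
    have "{q, p} \<noteq> {i, k}" using that ik by (auto simp: doubleton_eq_iff)
    then show ?thesis using swap_cmp[OF permutes_inj[OF w] wik ab, of q p] that
      by (auto simp: inv_set_def)
  qed
  then show ?thesis by (auto simp: inv_set_def)
qed

lemma ex_down:
  "w \<in> quot n J \<Longrightarrow> \<exists>x\<in>quot n J. avoids231 n J x \<and> weak_le n x w \<and>
     (\<forall>y\<in>quot n J. avoids231 n J y \<and> weak_le n y w \<longrightarrow> weak_le n y x)"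
proof (induction "card (inv_set n w)" arbitrary: w rule: less_induct)
  case less
  show ?case
  proof (cases "avoids231 n J w")
    case True
    then show ?thesis using less.prems by (auto simp: weak_le_def)
  next
    case False
    then obtain i j k where ijk: "1 \<le> i" "i < j" "j < k" "k \<le> n" and dr: "diff_regions n J i j k"
      and wv: "w k < w i" "w i < w j" "w i = w k + 1"
      unfolding avoids231_def by blast
    have w: "w permutes {1..n}" using less.prems by (simp add: quot_def)
    define w' where "w' = transpose (w k) (Suc (w k)) \<circ> w"
    have ab: "{w i, w k} = {w k, Suc (w k)}" using wv by auto
    have rr: "region n J i \<noteq> region n J k" using dr by (simp add: diff_regions_def)
    have q': "w' \<in> quot n J" unfolding w'_def
      by (rule swap_quot[OF less.prems _ _ _ ab rr]) (use ijk in auto)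
    have ikw: "(i, k) \<in> inv_set n w" using ijk wv by (auto simp: inv_set_def)
    have ikw': "(i, k) \<notin> inv_set n w'" using ijk wv by (auto simp: inv_set_def w'_def transpose_def)
    have e: "inv_set n w' = inv_set n w - {(i, k)}"
      using swap_inv[OF w _ ab] ijk ikw' unfolding w'_def by auto
    have "card (inv_set n w') < card (inv_set n w)"
      unfolding e by (rule card_Diff1_less[OF finite_inv ikw])
    from less.hyps[OF this q'] obtain x where x: "x \<in> quot n J" "avoids231 n J x" "weak_le n x w'"
      "\<forall>y\<in>quot n J. avoids231 n J y \<and> weak_le n y w' \<longrightarrow> weak_le n y x" by blast
    show ?thesis
    proof (intro bexI[OF _ x(1)] conjI ballI impI)
      show "avoids231 n J x" by fact
      show "weak_le n x w" using x(3) e by (auto simp: weak_le_def)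
    next
      fix y assume y: "y \<in> quot n J" "avoids231 n J y \<and> weak_le n y w"
      have yp: "y permutes {1..n}" using y by (simp add: quot_def)
      have "\<not> y k < y i"
        by (rule down_claim[OF w yp _ ijk dr wv]) (use y in \<open>auto simp: weak_le_def\<close>)
      then have "(i, k) \<notin> inv_set n y" by (auto simp: inv_set_def)
      then have "weak_le n y w'" using y e by (auto simp: weak_le_def)
      then show "weak_le n y x" using x(4) y by auto
    qed
  qed
qed

lemma ex_up:
  "w \<in> quot n J \<Longrightarrow> \<exists>x\<in>quot n J. avoids132 n J x \<and> weak_le n w x \<and>
     (\<forall>y\<in>quot n J. avoids132 n J y \<and> weak_le n w y \<longrightarrow> weak_le n x y)"
proof (induction "card ({1..n} \<times> {1..n} - inv_set n w)" arbitrary: w rule: less_induct)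
  case less
  show ?case
  proof (cases "avoids132 n J w")
    case True
    then show ?thesis using less.prems by (auto simp: weak_le_def)
  next
    case False
    then obtain i j k where ijk: "1 \<le> i" "i < j" "j < k" "k \<le> n" and dr: "diff_regions n J i j k"
      and wv: "w i < w k" "w k < w j" "w k = w i + 1"
      unfolding avoids132_def by blast
    have w: "w permutes {1..n}" using less.prems by (simp add: quot_def)
    define w' where "w' = transpose (w i) (Suc (w i)) \<circ> w"
    have ab: "{w i, w k} = {w i, Suc (w i)}" using wv by auto
    have rr: "region n J i \<noteq> region n J k" using dr by (simp add: diff_regions_def)
    have q': "w' \<in> quot n J" unfolding w'_def
      by (rule swap_quot[OF less.prems _ _ _ ab rr]) (use ijk in auto)
    have ikw: "(i, k) \<notin> inv_set n w" using ijk wv by (auto simp: inv_set_def)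
    have ikw': "(i, k) \<in> inv_set n w'" using ijk wv by (auto simp: inv_set_def w'_def transpose_def)
    have e: "inv_set n w' = inv_set n w \<union> {(i, k)}"
      using swap_inv[OF w _ ab] ijk ikw' unfolding w'_def by auto
    have ikU: "(i, k) \<in> {1..n} \<times> {1..n}" using ijk by auto
    have eq: "{1..n} \<times> {1..n} - inv_set n w' = ({1..n} \<times> {1..n} - inv_set n w) - {(i, k)}"
      using e by auto
    have "card ({1..n} \<times> {1..n} - inv_set n w') < card ({1..n} \<times> {1..n} - inv_set n w)"
      unfolding eq by (rule card_Diff1_less) (use ikw ikU in auto)
    from less.hyps[OF this q'] obtain x where x: "x \<in> quot n J" "avoids132 n J x" "weak_le n w' x"
      "\<forall>y\<in>quot n J. avoids132 n J y \<and> weak_le n w' y \<longrightarrow> weak_le n x y" by blast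
    show ?thesis
    proof (intro bexI[OF _ x(1)] conjI ballI impI)
      show "avoids132 n J x" by fact
      show "weak_le n w x" using x(3) e by (auto simp: weak_le_def)
    next
      fix y assume y: "y \<in> quot n J" "avoids132 n J y \<and> weak_le n w y"
      have yp: "y permutes {1..n}" using y by (simp add: quot_def)
      have "y k < y i"
        by (rule up_claim[OF w yp _ ijk dr wv]) (use y in \<open>auto simp: weak_le_def\<close>)
      then have "(i, k) \<in> inv_set n y" using ijk by (auto simp: inv_set_def)
      then have "weak_le n w' y" using y e by (auto simp: weak_le_def)
      then show "weak_le n x y" using x(4) y by auto
    qed
  qed
qed

lemma Pi_down_prop:
  assumes "w \<in> quot n J"
  shows "Pi_down n J w \<in> quot n J \<and> avoids231 n J (Pi_down n J w) \<and> weak_le n (Pi_down n J w) w \<and>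
     (\<forall>y\<in>quot n J. avoids231 n J y \<and> weak_le n y w \<longrightarrow> weak_le n y (Pi_down n J w))"
proof -
  have ex1: "\<exists>!x. x \<in> quot n J \<and> avoids231 n J x \<and> weak_le n x w \<and>
     (\<forall>y\<in>quot n J. avoids231 n J y \<and> weak_le n y w \<longrightarrow> weak_le n y x)"
  proof (rule ex_ex1I)
    show "\<exists>x. x \<in> quot n J \<and> avoids231 n J x \<and> weak_le n x w \<and>
     (\<forall>y\<in>quot n J. avoids231 n J y \<and> weak_le n y w \<longrightarrow> weak_le n y x)"
      using ex_down[OF assms] by blast
  next
    fix x y assume "x \<in> quot n J \<and> avoids231 n J x \<and> weak_le n x w \<and>
     (\<forall>y\<in>quot n J. avoids231 n J y \<and> weak_le n y w \<longrightarrow> weak_le n y x)"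
      "y \<in> quot n J \<and> avoids231 n J y \<and> weak_le n y w \<and>
     (\<forall>ya\<in>quot n J. avoids231 n J ya \<and> weak_le n ya w \<longrightarrow> weak_le n ya y)"
    then have "x \<in> quot n J" "y \<in> quot n J" "weak_le n x y" "weak_le n y x" by blast+
    then have "x permutes {1..n}" "y permutes {1..n}" "inv_set n x = inv_set n y"
      unfolding weak_le_def quot_def by blast+
    then show "x = y" by (rule inv_eq_imp_eq)
  qed
  show ?thesis unfolding Pi_down_def by (rule theI'[OF ex1])
qed

lemma Pi_up_prop:
  assumes "w \<in> quot n J"
  shows "Pi_up n J w \<in> quot n J \<and> avoids132 n J (Pi_up n J w) \<and> weak_le n w (Pi_up n J w) \<and>
     (\<forall>y\<in>quot n J. avoids132 n J y \<and> weak_le n w y \<longrightarrow> weak_le n (Pi_up n J w) y)"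
proof -
  have ex1: "\<exists>!x. x \<in> quot n J \<and> avoids132 n J x \<and> weak_le n w x \<and>
     (\<forall>y\<in>quot n J. avoids132 n J y \<and> weak_le n w y \<longrightarrow> weak_le n x y)"
  proof (rule ex_ex1I)
    show "\<exists>x. x \<in> quot n J \<and> avoids132 n J x \<and> weak_le n w x \<and>
     (\<forall>y\<in>quot n J. avoids132 n J y \<and> weak_le n w y \<longrightarrow> weak_le n x y)"
      using ex_up[OF assms] by blast
  next
    fix x y assume "x \<in> quot n J \<and> avoids132 n J x \<and> weak_le n w x \<and>
     (\<forall>y\<in>quot n J. avoids132 n J y \<and> weak_le n w y \<longrightarrow> weak_le n x y)"
      "y \<in> quot n J \<and> avoids132 n J y \<and> weak_le n w y \<and>
     (\<forall>ya\<in>quot n J. avoids132 n J ya \<and> weak_le n w ya \<longrightarrow> weak_le n y ya)"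
    then have "x \<in> quot n J" "y \<in> quot n J" "weak_le n x y" "weak_le n y x" by blast+
    then have "x permutes {1..n}" "y permutes {1..n}" "inv_set n x = inv_set n y"
      unfolding weak_le_def quot_def by blast+
    then show "x = y" by (rule inv_eq_imp_eq)
  qed
  show ?thesis unfolding Pi_up_def by (rule theI'[OF ex1])
qed

theorem lemma3p15:
  fixes n :: nat and J :: "nat set" and u v :: "nat \<Rightarrow> nat"
  assumes "J \<subseteq> {1..<n}"
    and "u \<in> quot n J" and "v \<in> quot n J"
    and "weak_le n u v"
  shows "weak_le n (Pi_down n J u) (Pi_down n J v) \<and> weak_le n (Pi_up n J u) (Pi_up n J v)"
proof
  have du: "Pi_down n J u \<in> quot n J" "avoids231 n J (Pi_down n J u)" "weak_le n (Pi_down n J u) u"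
    using Pi_down_prop[OF assms(2)] by auto
  have "weak_le n (Pi_down n J u) v" using du(3) assms(4) by (auto simp: weak_le_def)
  then show "weak_le n (Pi_down n J u) (Pi_down n J v)"
    using Pi_down_prop[OF assms(3)] du by blast
next
  have dv: "Pi_up n J v \<in> quot n J" "avoids132 n J (Pi_up n J v)" "weak_le n v (Pi_up n J v)"
    using Pi_up_prop[OF assms(3)] by auto
  have "weak_le n u (Pi_up n J v)" using dv(3) assms(4) by (auto simp: weak_le_def)
  then show "weak_le n (Pi_up n J u) (Pi_up n J v)"
    using Pi_up_prop[OF assms(2)] dv by blast
qed

end
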